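(* Fix a general instance satisfying the unique-default-action assumption, with relevant-action tie-breaking, and a true bias $\alpha^\star\in(0,1]$. Suppose there is a true-bias optimal scheme $\tau^\star$ with $P_{\rm info}^{\alpha^\star}(\tau^\star)=0$. Then there exists $\delta>0$ such that for every interval $J\subseteq(0,1]$ with $\alpha^\star\in J$ and $|J|\le\delta$: - every atom $(p_i,\nu_i,a_i)$ of $\tau^\star$ with $p_i>0$ satisfies $\nu_i\in R_{a_i}^J$; - $\tau^\star$ attains the interval-safe optimum, so that $\mathrm{OPT}^{\rm safe}(J)=\mathrm{OPT}(\alpha^\star)$.
   Context: General model: finite $\Omega$, $A$, full-support prior $\mu_0$, utilities $u_S,u_R$, and $\Delta u_{a,a'}(\omega)=u_R(a,\omega)-u_R(a',\omega)$. A receiver with bias $\alpha$ best-responds to $(1-\alpha)\mu_0+\alpha\nu$. Action regions. For $\alpha\in(0,1]$: $b_{a,a'}(\alpha)=\frac{\alpha-1}{\alpha}\Delta u_{a,a'}^\top\mu_0$ and $R_a^\alpha=\{\nu\in\Delta(\Omega):\Delta u_{a,a'}^\top\nu\ge b_{a,a'}(\alpha)\ \forall a'\neq a\}$. For $J=[\underline\alpha,\overline\alpha]\subseteq(0,1]$: $b_{a,a'}(J)=\max\{b_{a,a'}(\underline\alpha),b_{a,a'}(\overline\alpha)\}$, $R_a^J$ is defined as $R_a^\alpha$ with $b_{a,a'}(J)$, and $\mathrm{int}_{IC}(R_a^J)$ uses strict inequalities. Relevant actions: $A_{\rm rel}$ is the set of actions that are the unique receiver best response at $\alpha^\star$ for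 some posterior. Tie-breaking: never outside $A_{\rm rel}$, and sender-favorable among relevant ties. Unique default action $a_0$ at the prior. Schemes. A scheme is a finite list of triples $(p_i,\nu_i,a_i)$ with $\sum p_i=1$, $p_i\ge0$, $\sum p_i\nu_i=\mu_0$, and value $\sum_i p_i\sum_\omega\nu_i(\omega)u_S(a_i,\omega)$. - $\mathrm{OPT}(\alpha^\star)$ is the supremum of values over schemes with $a_i\in A_{\rm rel}$ and $\nu_i\in R_{a_i}^{\alpha^\star}$; a true-bias optimal scheme attains it. - $\mathrm{OPT}^{\rm safe}(J)$ is the supremum over schemes with $\nu_i\in R_{a_i}^J$ and $\mathrm{int}_{IC}(R_{a_i}^J)\ne\emptyset$. Informative mass. A pair $(a,a')$ is movable if $\Delta u_{a,a'}^\top\mu_0\neq0$. $P^{\alpha^\star}_{\rm info}(\tau)$ is the total mass of atoms with $\Delta u_{a_i,a'}^\top\nu_i=b_{a_i,a'}(\alpha^\star)$ for some movable pair $(a_i,a')$. *)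

theory Defs
  imports Main "HOL-Library.Library"
begin

type_synonym ('w, 'a) scheme = "(real \<times> ('w \<Rightarrow> real) \<times> 'a) list"

definition dot :: "('w::finite \<Rightarrow> real) \<Rightarrow> ('w \<Rightarrow> real) \<Rightarrow> real" where
  "dot f g = (\<Sum>w\<in>UNIV. f w * g w)"

definition simplex :: "('w::finite \<Rightarrow> real) set" where
  "simplex = {\<nu>. (\<forall>w. 0 \<le> \<nu> w) \<and> (\<Sum>w\<in>UNIV. \<nu> w) = 1}"

definition dU :: "('a \<Rightarrow> 'w \<Rightarrow> real) \<Rightarrow> 'a \<Rightarrow> 'a \<Rightarrow> 'w \<Rightarrow> real" where
  "dU uR a a' w = uR a w - uR a' w"

definition BR :: "('a \<Rightarrow> 'w::finite \<Rightarrow> real) \<Rightarrow> ('w \<Rightarrow> real) \<Rightarrow> 'a set" where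
  "BR uR q = {a. \<forall>a'. dot (uR a') q \<le> dot (uR a) q}"

definition biased :: "('w \<Rightarrow> real) \<Rightarrow> real \<Rightarrow> ('w \<Rightarrow> real) \<Rightarrow> 'w \<Rightarrow> real" where
  "biased mu0 \<alpha> \<nu> w = (1 - \<alpha>) * mu0 w + \<alpha> * \<nu> w"

definition bnd :: "('a \<Rightarrow> 'w::finite \<Rightarrow> real) \<Rightarrow> ('w \<Rightarrow> real) \<Rightarrow> 'a \<Rightarrow> 'a \<Rightarrow> real \<Rightarrow> real" where
  "bnd uR mu0 a a' \<alpha> = ((\<alpha> - 1) / \<alpha>) * dot (dU uR a a') mu0"

definition region :: "('a \<Rightarrow> 'w::finite \<Rightarrow> real) \<Rightarrow> ('w \<Rightarrow> real) \<Rightarrow> 'a \<Rightarrow> real \<Rightarrow> ('w \<Rightarrow> real) set" where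
  "region uR mu0 a \<alpha> = {\<nu>\<in>simplex. \<forall>a'. a' \<noteq> a \<longrightarrow> bnd uR mu0 a a' \<alpha> \<le> dot (dU uR a a') \<nu>}"

definition bndJ :: "('a \<Rightarrow> 'w::finite \<Rightarrow> real) \<Rightarrow> ('w \<Rightarrow> real) \<Rightarrow> 'a \<Rightarrow> 'a \<Rightarrow> real \<Rightarrow> real \<Rightarrow> real" where
  "bndJ uR mu0 a a' lo hi = max (bnd uR mu0 a a' lo) (bnd uR mu0 a a' hi)"

definition regionJ :: "('a \<Rightarrow> 'w::finite \<Rightarrow> real) \<Rightarrow> ('w \<Rightarrow> real) \<Rightarrow> 'a \<Rightarrow> real \<Rightarrow> real \<Rightarrow> ('w \<Rightarrow> real) set" where
  "regionJ uR mu0 a lo hi = {\<nu>\<in>simplex. \<forall>a'. a' \<noteq> a \<longrightarrow> bndJ uR mu0 a a' lo hi \<le> dot (dU uR a a') \<nu>}"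

definition intIC_J :: "('a \<Rightarrow> 'w::finite \<Rightarrow> real) \<Rightarrow> ('w \<Rightarrow> real) \<Rightarrow> 'a \<Rightarrow> real \<Rightarrow> real \<Rightarrow> ('w \<Rightarrow> real) set" where
  "intIC_J uR mu0 a lo hi = {\<nu>\<in>simplex. \<forall>a'. a' \<noteq> a \<longrightarrow> bndJ uR mu0 a a' lo hi < dot (dU uR a a') \<nu>}"

definition A_rel :: "('a \<Rightarrow> 'w::finite \<Rightarrow> real) \<Rightarrow> ('w \<Rightarrow> real) \<Rightarrow> real \<Rightarrow> 'a set" where
  "A_rel uR mu0 \<alpha>s = {a. \<exists>\<nu>\<in>simplex. BR uR (biased mu0 \<alpha>s \<nu>) = {a}}"

definition is_scheme :: "('w::finite \<Rightarrow> real) \<Rightarrow> ('w, 'a) scheme \<Rightarrow> bool" where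
  "is_scheme mu0 \<tau> \<longleftrightarrow>
     (\<forall>(p, \<nu>, a) \<in> set \<tau>. 0 \<le> p \<and> \<nu> \<in> simplex) \<and>
     sum_list (map fst \<tau>) = 1 \<and>
     (\<forall>w. sum_list (map (\<lambda>(p, \<nu>, a). p * \<nu> w) \<tau>) = mu0 w)"

definition svalue :: "('a \<Rightarrow> 'w::finite \<Rightarrow> real) \<Rightarrow> ('w, 'a) scheme \<Rightarrow> real" where
  "svalue uS \<tau> = sum_list (map (\<lambda>(p, \<nu>, a). p * (\<Sum>w\<in>UNIV. \<nu> w * uS a w)) \<tau>)"

definition feasible_true :: "('a \<Rightarrow> 'w::finite \<Rightarrow> real) \<Rightarrow> ('w \<Rightarrow> real) \<Rightarrow> real \<Rightarrow> ('w, 'a) scheme \<Rightarrow> bool" where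
  "feasible_true uR mu0 \<alpha>s \<tau> \<longleftrightarrow> is_scheme mu0 \<tau> \<and>
     (\<forall>(p, \<nu>, a) \<in> set \<tau>. a \<in> A_rel uR mu0 \<alpha>s \<and> \<nu> \<in> region uR mu0 a \<alpha>s)"

definition OPT :: "('a \<Rightarrow> 'w::finite \<Rightarrow> real) \<Rightarrow> ('a \<Rightarrow> 'w \<Rightarrow> real) \<Rightarrow> ('w \<Rightarrow> real) \<Rightarrow> real \<Rightarrow> real" where
  "OPT uS uR mu0 \<alpha>s = Sup (svalue uS ` {\<tau>. feasible_true uR mu0 \<alpha>s \<tau>})"

definition true_bias_optimal :: "('a \<Rightarrow> 'w::finite \<Rightarrow> real) \<Rightarrow> ('a \<Rightarrow> 'w \<Rightarrow> real) \<Rightarrow> ('w \<Rightarrow> real) \<Rightarrow> real \<Rightarrow> ('w, 'a) scheme \<Rightarrow> bool" where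
  "true_bias_optimal uS uR mu0 \<alpha>s \<tau> \<longleftrightarrow>
     feasible_true uR mu0 \<alpha>s \<tau> \<and> svalue uS \<tau> = OPT uS uR mu0 \<alpha>s"

definition feasible_safe :: "('a \<Rightarrow> 'w::finite \<Rightarrow> real) \<Rightarrow> ('w \<Rightarrow> real) \<Rightarrow> real \<Rightarrow> real \<Rightarrow> ('w, 'a) scheme \<Rightarrow> bool" where
  "feasible_safe uR mu0 lo hi \<tau> \<longleftrightarrow> is_scheme mu0 \<tau> \<and>
     (\<forall>(p, \<nu>, a) \<in> set \<tau>. \<nu> \<in> regionJ uR mu0 a lo hi \<and> intIC_J uR mu0 a lo hi \<noteq> {})"

definition OPT_safe :: "('a \<Rightarrow> 'w::finite \<Rightarrow> real) \<Rightarrow> ('a \<Rightarrow> 'w \<Rightarrow> real) \<Rightarrow> ('w \<Rightarrow> real) \<Rightarrow> real \<Rightarrow> real \<Rightarrow> real" where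
  "OPT_safe uS uR mu0 lo hi = Sup (svalue uS ` {\<tau>. feasible_safe uR mu0 lo hi \<tau>})"

definition movable :: "('a \<Rightarrow> 'w::finite \<Rightarrow> real) \<Rightarrow> ('w \<Rightarrow> real) \<Rightarrow> 'a \<Rightarrow> 'a \<Rightarrow> bool" where
  "movable uR mu0 a a' \<longleftrightarrow> dot (dU uR a a') mu0 \<noteq> 0"

definition P_info :: "('a \<Rightarrow> 'w::finite \<Rightarrow> real) \<Rightarrow> ('w \<Rightarrow> real) \<Rightarrow> real \<Rightarrow> ('w, 'a) scheme \<Rightarrow> real" where
  "P_info uR mu0 \<alpha>s \<tau> = sum_list (map (\<lambda>(p, \<nu>, a).
      if (\<exists>a'. movable uR mu0 a a' \<and> dot (dU uR a a') \<nu> = bnd uR mu0 a a' \<alpha>s) then p else 0) \<tau>)"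

end

theory Submission
  imports Defs
begin


lemma dot_dU: "dot (dU uR a a') q = dot (uR a) q - dot (uR a') q"
  unfolding dot_def dU_def by (simp add: left_diff_distrib sum_subtractf)

lemma dot_biased: "dot f (biased mu0 \<alpha> \<nu>) = (1-\<alpha>) * dot f mu0 + \<alpha> * dot f \<nu>"
  unfolding dot_def biased_def
  by (simp add: distrib_left sum.distrib sum_distrib_left mult.left_commute)

lemma key_ineq:
  fixes \<alpha> c d :: real
  assumes "0 < \<alpha>"
  shows "((\<alpha>-1)/\<alpha>*c < d) \<longleftrightarrow> (0 < (1-\<alpha>)*c + \<alpha>*d)"
proof -
  have e: "\<alpha> * ((\<alpha>-1)/\<alpha>*c) = (\<alpha>-1)*c" using assms by simp
  have "((\<alpha>-1)/\<alpha>*c < d) \<longleftrightarrow> \<alpha> * ((\<alpha>-1)/\<alpha>*c) < \<alpha> * d"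
    using assms by (simp only: mult_less_cancel_left_pos)
  also have "\<dots> \<longleftrightarrow> (0 < (1-\<alpha>)*c + \<alpha>*d)"
  proof -
    have e2: "(\<alpha>-1)*c = \<alpha>*c - c" "(1-\<alpha>)*c = c - \<alpha>*c" by (simp_all add: algebra_simps)
    show ?thesis unfolding e e2 by linarith
  qed
  finally show ?thesis .
qed

lemma rel_strict:
  assumes "0 < \<alpha>" "BR uR (biased mu0 \<alpha> \<nu>) = {a}" "a' \<noteq> a"
  shows "bnd uR mu0 a a' \<alpha> < dot (dU uR a a') \<nu>"
proof -
  define q where "q = biased mu0 \<alpha> \<nu>"
  have aB: "a \<in> BR uR q" and nB: "a' \<notin> BR uR q" using assms unfolding q_def by auto
  from nB obtain b where b: "dot (uR a') q < dot (uR b) q" unfolding BR_def by (auto simp: not_le)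
  have "dot (uR b) q \<le> dot (uR a) q" using aB unfolding BR_def by auto
  with b have "0 < dot (dU uR a a') q" by (simp add: dot_dU)
  then have "0 < (1-\<alpha>) * dot (dU uR a a') mu0 + \<alpha> * dot (dU uR a a') \<nu>"
    unfolding q_def by (simp add: dot_biased)
  then show ?thesis unfolding bnd_def using key_ineq[OF assms(1)] by blast
qed

lemma strict_rel:
  assumes "0 < \<alpha>" "\<nu> \<in> simplex" "\<forall>a'. a' \<noteq> a \<longrightarrow> bnd uR mu0 a a' \<alpha> < dot (dU uR a a') \<nu>"
  shows "a \<in> A_rel uR mu0 \<alpha>"
proof -
  define q where "q = biased mu0 \<alpha> \<nu>"
  have lt: "dot (uR a') q < dot (uR a) q" if "a' \<noteq> a" for a'
  proof -
    have "0 < (1-\<alpha>) * dot (dU uR a a') mu0 + \<alpha> * dot (dU uR a a') \<nu>"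
      using assms(3) that key_ineq[OF assms(1)] unfolding bnd_def by blast
    then have "0 < dot (dU uR a a') q" unfolding q_def by (simp add: dot_biased)
    then show ?thesis by (simp add: dot_dU)
  qed
  have all: "\<forall>a'. dot (uR a') q \<le> dot (uR a) q"
  proof
    fix a' show "dot (uR a') q \<le> dot (uR a) q"
    proof (cases "a' = a")
      case True then show ?thesis by simp
    next
      case False then show ?thesis using lt[OF False] by simp
    qed
  qed
  have "BR uR q = {a}"
  proof
    show "{a} \<subseteq> BR uR q" using all unfolding BR_def by simp
    show "BR uR q \<subseteq> {a}"
    proof
      fix b assume "b \<in> BR uR q"
      then have le: "dot (uR a) q \<le> dot (uR b) q" unfolding BR_def by simp
      show "b \<in> {a}"
      proof (rule ccontr)
        assume "b \<notin> {a}"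
        then have "b \<noteq> a" by simp
        from lt[OF this] le show False by linarith
      qed
    qed
  qed
  then show ?thesis unfolding A_rel_def q_def using assms(2) by blast
qed

lemma bnd_mono:
  assumes "0 < lo" "lo \<le> \<alpha>" "\<alpha> \<le> hi"
  shows "bnd uR mu0 a a' \<alpha> \<le> bndJ uR mu0 a a' lo hi"
proof -
  have f: "(x-1)/x = 1 - 1/x" if "0 < x" for x :: real using that by (simp add: diff_divide_distrib)
  have "1/\<alpha> \<le> 1/lo" "1/hi \<le> 1/\<alpha>" using assms by (auto simp: frac_le)
  moreover have "0 < \<alpha>" "0 < hi" using assms by linarith+
  ultimately have m1: "(lo-1)/lo \<le> (\<alpha>-1)/\<alpha>" and m2: "(\<alpha>-1)/\<alpha> \<le> (hi-1)/hi"
    using f[of lo] f[of \<alpha>] f[of hi] assms(1) by linarith+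
  define c where "c = dot (dU uR a a') mu0"
  show ?thesis
  proof (cases "0 \<le> c")
    case True
    then have "(\<alpha>-1)/\<alpha>*c \<le> (hi-1)/hi*c" using m2 by (rule mult_right_mono[rotated])
    then show ?thesis unfolding bndJ_def bnd_def c_def[symmetric] by simp
  next
    case False
    then have "(\<alpha>-1)/\<alpha>*c \<le> (lo-1)/lo*c" using m1 by (intro mult_right_mono_neg) auto
    then show ?thesis unfolding bndJ_def bnd_def c_def[symmetric] by simp
  qed
qed

lemma cont_ev:
  fixes t c x :: real
  assumes "0 < t" "(t-1)/t*c < x"
  shows "eventually (\<lambda>\<delta>. \<forall>\<alpha>. \<bar>\<alpha>-t\<bar> \<le> \<delta> \<longrightarrow> (\<alpha>-1)/\<alpha>*c < x) (at_right 0)"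
proof -
  have "((\<lambda>\<alpha>. (\<alpha>-1)/\<alpha>*c) \<longlongrightarrow> (t-1)/t*c) (at t)"
    using assms(1) by (intro tendsto_intros) auto
  from order_tendstoD(2)[OF this assms(2)]
  obtain d where d: "d > 0" "\<And>y. y \<noteq> t \<Longrightarrow> dist y t < d \<Longrightarrow> (y-1)/y*c < x"
    unfolding eventually_at by auto
  have "eventually (\<lambda>\<delta>. \<delta> \<in> {0<..<d}) (at_right 0)" using d(1) by (rule eventually_at_right_real)
  then show ?thesis
  proof (rule eventually_mono)
    fix \<delta> assume "\<delta> \<in> {0<..<(d::real)}"
    then show "\<forall>\<alpha>. \<bar>\<alpha>-t\<bar> \<le> \<delta> \<longrightarrow> (\<alpha>-1)/\<alpha>*c < x"
    proof (intro allI impI)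
      fix \<alpha> assume "\<bar>\<alpha>-t\<bar> \<le> \<delta>"
      then show "(\<alpha>-1)/\<alpha>*c < x" using d(2)[of \<alpha>] assms(2) \<open>\<delta> \<in> {0<..<d}\<close>
        by (cases "\<alpha> = t") (auto simp: dist_real_def)
    qed
  qed
qed

lemma ev_exists:
  assumes "eventually P (at_right (0::real))"
  shows "\<exists>\<delta>>0. P \<delta>"
proof -
  have "eventually (\<lambda>\<delta>. \<delta> \<in> {0<..<1} \<and> P \<delta>) (at_right (0::real))"
    by (rule eventually_mono[OF eventually_conj[OF eventually_at_right_real[of 0 1] assms]]) auto
  from eventually_happens'[OF _ this] show ?thesis by auto
qed

lemma sum_list_zero_each:
  fixes f :: "'x \<Rightarrow> real"
  assumes "\<forall>x\<in>set xs. 0 \<le> f x" "sum_list (map f xs) = 0" "x \<in> set xs"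
  shows "f x = 0"
  using assms
proof (induction xs)
  case Nil then show ?case by simp
next
  case (Cons y ys)
  have "0 \<le> sum_list (map f ys)" using Cons.prems(1) by (intro sum_list_nonneg) auto
  then have "f y = 0" "sum_list (map f ys) = 0" using Cons.prems(1,2) by auto
  then show ?case using Cons by auto
qed

lemma sum_list_filter_zero:
  fixes f :: "'x \<Rightarrow> real"
  assumes "\<forall>x\<in>set xs. \<not> P x \<longrightarrow> f x = 0"
  shows "sum_list (map f (filter P xs)) = sum_list (map f xs)"
  using assms by (induction xs) auto

lemma sum_list_bound:
  fixes f :: "'x \<Rightarrow> real"
  assumes "\<forall>x\<in>set xs. f x \<le> g x * K"
  shows "sum_list (map f xs) \<le> sum_list (map g xs) * K"
  using assms by (induction xs) (auto simp: distrib_right)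


theorem mainTheorem7:
  fixes uS uR :: "'a::finite \<Rightarrow> 'w::finite \<Rightarrow> real"
    and mu0 :: "'w \<Rightarrow> real"
    and \<alpha>s :: real
    and \<tau>s :: "('w, 'a) scheme"
  assumes prior_pos: "\<forall>w. 0 < mu0 w"
    and prior_sum: "(\<Sum>w\<in>UNIV. mu0 w) = 1"
    and unique_default: "\<exists>a0. BR uR mu0 = {a0}"
    and alpha_pos: "0 < \<alpha>s" and alpha_le: "\<alpha>s \<le> 1"
    and opt: "true_bias_optimal uS uR mu0 \<alpha>s \<tau>s"
    and noinfo: "P_info uR mu0 \<alpha>s \<tau>s = 0"
  shows "\<exists>\<delta>>0. \<forall>lo hi. 0 < lo \<longrightarrow> lo \<le> hi \<longrightarrow> hi \<le> 1 \<longrightarrow> lo \<le> \<alpha>s \<longrightarrow> \<alpha>s \<le> hi \<longrightarrow> hi - lo \<le> \<delta> \<longrightarrow>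
           (\<forall>(p, \<nu>, a) \<in> set \<tau>s. 0 < p \<longrightarrow> \<nu> \<in> regionJ uR mu0 a lo hi)
         \<and> feasible_safe uR mu0 lo hi (filter (\<lambda>(p, \<nu>, a). 0 < p) \<tau>s)
         \<and> svalue uS \<tau>s = OPT_safe uS uR mu0 lo hi
         \<and> OPT_safe uS uR mu0 lo hi = OPT uS uR mu0 \<alpha>s"
proof -
  have opt_f: "feasible_true uR mu0 \<alpha>s \<tau>s" and opt_v: "svalue uS \<tau>s = OPT uS uR mu0 \<alpha>s"
    using opt unfolding true_bias_optimal_def by auto
  have sch: "is_scheme mu0 \<tau>s" and atoms: "\<forall>(p,\<nu>,a)\<in>set \<tau>s. a \<in> A_rel uR mu0 \<alpha>s \<and> \<nu> \<in> region uR mu0 a \<alpha>s"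
    using opt_f unfolding feasible_true_def by auto
  have nonneg: "\<forall>(p,\<nu>,a)\<in>set \<tau>s. 0 \<le> p \<and> \<nu> \<in> simplex" using sch unfolding is_scheme_def by auto
  have noeq: "dot (dU uR a a') \<nu> \<noteq> bnd uR mu0 a a' \<alpha>s"
    if "(p,\<nu>,a) \<in> set \<tau>s" "0 < p" "movable uR mu0 a a'" for p \<nu> a a'
  proof
    assume eq: "dot (dU uR a a') \<nu> = bnd uR mu0 a a' \<alpha>s"
    let ?f = "\<lambda>(p, \<nu>, a). if (\<exists>a'. movable uR mu0 a a' \<and> dot (dU uR a a') \<nu> = bnd uR mu0 a a' \<alpha>s) then p else (0::real)"
    have "\<forall>x\<in>set \<tau>s. 0 \<le> ?f x" using nonneg by auto
    from sum_list_zero_each[OF this noinfo[unfolded P_info_def] that(1)] have "?f (p,\<nu>,a) = 0" .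
    moreover have "\<exists>a'. movable uR mu0 a a' \<and> dot (dU uR a a') \<nu> = bnd uR mu0 a a' \<alpha>s"
      using eq that(3) by blast
    ultimately show False using that(2) by simp
  qed
  define \<nu>0 where "\<nu>0 a = (SOME \<nu>. \<nu> \<in> simplex \<and> BR uR (biased mu0 \<alpha>s \<nu>) = {a})" for a
  have \<nu>0: "\<nu>0 a \<in> simplex \<and> BR uR (biased mu0 \<alpha>s (\<nu>0 a)) = {a}" if "a \<in> A_rel uR mu0 \<alpha>s" for a
  proof -
    from that obtain \<nu> where "\<nu> \<in> simplex \<and> BR uR (biased mu0 \<alpha>s \<nu>) = {a}" unfolding A_rel_def by auto
    then show ?thesis unfolding \<nu>0_def by (rule someI[where P="\<lambda>\<nu>. \<nu> \<in> simplex \<and> BR uR (biased mu0 \<alpha>s \<nu>) = {a}"])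
  qed
  define Q1 where "Q1 p \<nu> a a' \<delta> = (0 < (p::real) \<longrightarrow> a' \<noteq> a \<longrightarrow>
      (\<forall>\<alpha>. \<bar>\<alpha>-\<alpha>s\<bar> \<le> \<delta> \<longrightarrow> bnd uR mu0 a a' \<alpha> \<le> dot (dU uR a a') \<nu>))" for p \<nu> a a' \<delta>
  define Q2 where "Q2 a a' \<delta> = (a' \<noteq> a \<longrightarrow>
      (\<forall>\<alpha>. \<bar>\<alpha>-\<alpha>s\<bar> \<le> \<delta> \<longrightarrow> bnd uR mu0 a a' \<alpha> < dot (dU uR a a') (\<nu>0 a)))" for a a' \<delta>
  have ev1: "eventually (\<lambda>\<delta>. \<forall>y\<in>set \<tau>s \<times> (UNIV::'a set). case y of ((p,\<nu>,a),a') \<Rightarrow> Q1 p \<nu> a a' \<delta>) (at_right 0)"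
  proof (rule eventually_ball_finite[where P="\<lambda>\<delta> y. case y of ((p,\<nu>,a),a') \<Rightarrow> Q1 p \<nu> a a' \<delta>"])
    show "finite (set \<tau>s \<times> (UNIV::'a set))" by simp
    show "\<forall>y\<in>set \<tau>s \<times> UNIV. eventually (\<lambda>\<delta>. case y of ((p,\<nu>,a),a') \<Rightarrow> Q1 p \<nu> a a' \<delta>) (at_right 0)"
    proof
      fix y assume y: "y \<in> set \<tau>s \<times> (UNIV::'a set)"
      obtain p \<nu> a a' where yy: "y = ((p,\<nu>,a),a')" by (cases y) auto
      have mem: "(p,\<nu>,a) \<in> set \<tau>s" using y yy by auto
      have reg: "bnd uR mu0 a a' \<alpha>s \<le> dot (dU uR a a') \<nu>" if "a' \<noteq> a"
        using atoms mem that unfolding region_def by auto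
      have "eventually (Q1 p \<nu> a a') (at_right 0)"
      proof (cases "0 < p \<and> a' \<noteq> a")
        case False then show ?thesis unfolding Q1_def by auto
      next
        case True
        show ?thesis
        proof (cases "movable uR mu0 a a'")
          case mv: True
          have "bnd uR mu0 a a' \<alpha>s < dot (dU uR a a') \<nu>"
            using reg[OF conjunct2[OF True]] noeq[OF mem conjunct1[OF True] mv] by linarith
          from cont_ev[OF alpha_pos this[unfolded bnd_def]]
          show ?thesis unfolding Q1_def bnd_def by (rule eventually_mono) (auto intro: less_imp_le)
        next
          case False
          then have z: "bnd uR mu0 a a' \<alpha> = 0" for \<alpha> unfolding movable_def bnd_def by simp
          have "Q1 p \<nu> a a' \<delta>" for \<delta> using reg[OF conjunct2[OF True]] unfolding Q1_def z by simp
          then show ?thesis by (intro always_eventually) simp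
        qed
      qed
      then show "eventually (\<lambda>\<delta>. case y of ((p,\<nu>,a),a') \<Rightarrow> Q1 p \<nu> a a' \<delta>) (at_right 0)"
        using yy by simp
    qed
  qed
  have ev2: "eventually (\<lambda>\<delta>. \<forall>y\<in>A_rel uR mu0 \<alpha>s \<times> (UNIV::'a set). case y of (a,a') \<Rightarrow> Q2 a a' \<delta>) (at_right 0)"
  proof (rule eventually_ball_finite[where P="\<lambda>\<delta> y. case y of (a,a') \<Rightarrow> Q2 a a' \<delta>"])
    show "finite (A_rel uR mu0 \<alpha>s \<times> (UNIV::'a set))" by simp
    show "\<forall>y\<in>A_rel uR mu0 \<alpha>s \<times> UNIV. eventually (\<lambda>\<delta>. case y of (a,a') \<Rightarrow> Q2 a a' \<delta>) (at_right 0)"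
    proof
      fix y assume y: "y \<in> A_rel uR mu0 \<alpha>s \<times> (UNIV::'a set)"
      obtain a a' where yy: "y = (a,a')" by (cases y) auto
      have "eventually (Q2 a a') (at_right 0)"
      proof (cases "a' \<noteq> a")
        case False then show ?thesis unfolding Q2_def by auto
      next
        case True
        have "a \<in> A_rel uR mu0 \<alpha>s" using y yy by auto
        from rel_strict[OF alpha_pos conjunct2[OF \<nu>0[OF this]] True]
        have "bnd uR mu0 a a' \<alpha>s < dot (dU uR a a') (\<nu>0 a)" .
        from cont_ev[OF alpha_pos this[unfolded bnd_def]]
        show ?thesis unfolding Q2_def bnd_def by (rule eventually_mono) auto
      qed
      then show "eventually (\<lambda>\<delta>. case y of (a,a') \<Rightarrow> Q2 a a' \<delta>) (at_right 0)"
        using yy by simp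
    qed
  qed
  obtain \<delta> where dpos: "\<delta> > 0"
    and G1: "\<forall>y\<in>set \<tau>s \<times> (UNIV::'a set). case y of ((p,\<nu>,a),a') \<Rightarrow> Q1 p \<nu> a a' \<delta>"
    and G2: "\<forall>y\<in>A_rel uR mu0 \<alpha>s \<times> (UNIV::'a set). case y of (a,a') \<Rightarrow> Q2 a a' \<delta>"
    using ev_exists[OF eventually_conj[OF ev1 ev2]] by blast
  define K where "K = (\<Sum>a\<in>UNIV. \<Sum>w\<in>UNIV. \<bar>uS a w\<bar>)"
  have vbound: "(\<Sum>w\<in>UNIV. \<nu> w * uS a w) \<le> K" if "\<nu> \<in> simplex" for \<nu> a
  proof -
    have "\<nu> w * uS a w \<le> \<bar>uS a w\<bar>" for w
    proof -
      have n0: "0 \<le> \<nu> w" using that unfolding simplex_def by auto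
      have "\<nu> w \<le> (\<Sum>w\<in>UNIV. \<nu> w)" using that unfolding simplex_def
        by (intro member_le_sum) auto
      then have n1: "\<nu> w \<le> 1" using that unfolding simplex_def by auto
      have "\<nu> w * uS a w \<le> \<nu> w * \<bar>uS a w\<bar>" using n0 by (intro mult_left_mono) auto
      also have "\<dots> \<le> 1 * \<bar>uS a w\<bar>" using n1 by (intro mult_right_mono) auto
      finally show ?thesis by simp
    qed
    then have "(\<Sum>w\<in>UNIV. \<nu> w * uS a w) \<le> (\<Sum>w\<in>UNIV. \<bar>uS a w\<bar>)" by (intro sum_mono)
    also have "\<dots> \<le> K" unfolding K_def
      by (rule member_le_sum[where f="\<lambda>a. \<Sum>w\<in>UNIV. \<bar>uS a w\<bar>"]) (auto intro: sum_nonneg)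
    finally show ?thesis .
  qed
  have sv_le: "svalue uS \<tau> \<le> K" if "is_scheme mu0 \<tau>" for \<tau>
  proof -
    have "svalue uS \<tau> \<le> sum_list (map fst \<tau>) * K" unfolding svalue_def
    proof (rule sum_list_bound)
      show "\<forall>x\<in>set \<tau>. (case x of (p, \<nu>, a) \<Rightarrow> p * (\<Sum>w\<in>UNIV. \<nu> w * uS a w)) \<le> fst x * K"
      proof
        fix x assume "x \<in> set \<tau>"
        moreover obtain p \<nu> a where "x = (p,\<nu>,a)" by (cases x) auto
        ultimately have "0 \<le> p" "\<nu> \<in> simplex" using that unfolding is_scheme_def by auto
        then show "(case x of (p, \<nu>, a) \<Rightarrow> p * (\<Sum>w\<in>UNIV. \<nu> w * uS a w)) \<le> fst x * K"
        proof -
          have "p * (\<Sum>w\<in>UNIV. \<nu> w * uS a w) \<le> p * K"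
            using \<open>0 \<le> p\<close> vbound[OF \<open>\<nu> \<in> simplex\<close>, of a] by (rule mult_left_mono[rotated])
          then show ?thesis using \<open>x = (p,\<nu>,a)\<close> by (simp add: mult.commute)
        qed
      qed
    qed
    then show ?thesis using that unfolding is_scheme_def by simp
  qed
  have bdd: "bdd_above (svalue uS ` {\<tau>. feasible_true uR mu0 \<alpha>s \<tau>})"
    using sv_le unfolding feasible_true_def bdd_above_def by blast
  show ?thesis
  proof (intro exI[of _ \<delta>] conjI dpos allI impI)
    fix lo hi :: real
    assume lo0: "0 < lo" and lohi: "lo \<le> hi" and hi1: "hi \<le> 1" and loa: "lo \<le> \<alpha>s" and ahi: "\<alpha>s \<le> hi"
      and len: "hi - lo \<le> \<delta>"
    have dlo: "\<bar>lo - \<alpha>s\<bar> \<le> \<delta>" and dhi: "\<bar>hi - \<alpha>s\<bar> \<le> \<delta>" using loa ahi len by auto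
    have inJ: "\<nu> \<in> regionJ uR mu0 a lo hi" if mem: "(p,\<nu>,a) \<in> set \<tau>s" and pp: "0 < p" for p \<nu> a
    proof -
      have "\<nu> \<in> simplex" using nonneg mem by auto
      moreover have "bndJ uR mu0 a a' lo hi \<le> dot (dU uR a a') \<nu>" if "a' \<noteq> a" for a'
      proof -
        have "Q1 p \<nu> a a' \<delta>" using G1 mem by fastforce
        then show ?thesis unfolding Q1_def bndJ_def using pp that dlo dhi by auto
      qed
      ultimately show ?thesis unfolding regionJ_def by auto
    qed
    then show "\<forall>(p, \<nu>, a) \<in> set \<tau>s. 0 < p \<longrightarrow> \<nu> \<in> regionJ uR mu0 a lo hi" by auto
    define \<tau>f where "\<tau>f = filter (\<lambda>(p, \<nu>, a). 0 < p) \<tau>s"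
    have zero_out: "\<forall>x\<in>set \<tau>s. \<not> (\<lambda>(p, \<nu>, a). 0 < p) x \<longrightarrow> f x = 0"
      if "\<And>p \<nu> a. f (0, \<nu>, a) = 0" for f :: "real \<times> ('w \<Rightarrow> real) \<times> 'a \<Rightarrow> real"
    proof
      fix x assume "x \<in> set \<tau>s"
      moreover obtain p \<nu> a where "x = (p,\<nu>,a)" by (cases x) auto
      ultimately show "\<not> (\<lambda>(p, \<nu>, a). 0 < p) x \<longrightarrow> f x = 0" using nonneg that by fastforce
    qed
    have sf: "is_scheme mu0 \<tau>f"
      unfolding is_scheme_def
    proof (intro conjI allI)
      show "\<forall>(p, \<nu>, a) \<in> set \<tau>f. 0 \<le> p \<and> \<nu> \<in> simplex" using nonneg unfolding \<tau>f_def by auto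
      have "sum_list (map fst \<tau>f) = sum_list (map fst \<tau>s)"
        unfolding \<tau>f_def by (rule sum_list_filter_zero[OF zero_out]) simp
      then show "sum_list (map fst \<tau>f) = 1" using sch unfolding is_scheme_def by simp
      fix w
      have "sum_list (map (\<lambda>(p, \<nu>, a). p * \<nu> w) \<tau>f) = sum_list (map (\<lambda>(p, \<nu>, a). p * \<nu> w) \<tau>s)"
        unfolding \<tau>f_def by (rule sum_list_filter_zero[OF zero_out]) simp
      then show "sum_list (map (\<lambda>(p, \<nu>, a). p * \<nu> w) \<tau>f) = mu0 w" using sch unfolding is_scheme_def by simp
    qed
    have intne: "intIC_J uR mu0 a lo hi \<noteq> {}" if "a \<in> A_rel uR mu0 \<alpha>s" for a
    proof -
      have "\<nu>0 a \<in> intIC_J uR mu0 a lo hi"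
        unfolding intIC_J_def
      proof (intro CollectI conjI allI impI)
        show "\<nu>0 a \<in> simplex" using \<nu>0[OF that] by auto
        fix a' assume "a' \<noteq> a"
        have "Q2 a a' \<delta>" using G2 that by fastforce
        then show "bndJ uR mu0 a a' lo hi < dot (dU uR a a') (\<nu>0 a)"
          unfolding Q2_def bndJ_def using \<open>a' \<noteq> a\<close> dlo dhi by auto
      qed
      then show ?thesis by auto
    qed
    have fs: "feasible_safe uR mu0 lo hi \<tau>f"
      unfolding feasible_safe_def
    proof (intro conjI sf)
      show "\<forall>(p, \<nu>, a) \<in> set \<tau>f. \<nu> \<in> regionJ uR mu0 a lo hi \<and> intIC_J uR mu0 a lo hi \<noteq> {}"
      proof (clarify)
        fix p \<nu> a assume m: "(p, \<nu>, a) \<in> set \<tau>f"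
        then have m': "(p,\<nu>,a) \<in> set \<tau>s" "0 < p" unfolding \<tau>f_def by auto
        have "a \<in> A_rel uR mu0 \<alpha>s" using atoms m'(1) by auto
        then show "\<nu> \<in> regionJ uR mu0 a lo hi \<and> intIC_J uR mu0 a lo hi \<noteq> {}"
          using inJ[OF m'] intne by auto
      qed
    qed
    then show "feasible_safe uR mu0 lo hi (filter (\<lambda>(p, \<nu>, a). 0 < p) \<tau>s)" unfolding \<tau>f_def .
    have safe_true: "feasible_true uR mu0 \<alpha>s \<tau>" if fsa: "feasible_safe uR mu0 lo hi \<tau>" for \<tau>
      unfolding feasible_true_def
    proof (intro conjI)
      show "is_scheme mu0 \<tau>" using fsa unfolding feasible_safe_def by auto
      show "\<forall>(p, \<nu>, a) \<in> set \<tau>. a \<in> A_rel uR mu0 \<alpha>s \<and> \<nu> \<in> region uR mu0 a \<alpha>s"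
      proof (clarify)
        fix p \<nu> a assume m: "(p, \<nu>, a) \<in> set \<tau>"
        then have r: "\<nu> \<in> regionJ uR mu0 a lo hi" and ne: "intIC_J uR mu0 a lo hi \<noteq> {}"
          using fsa unfolding feasible_safe_def by auto
        have mono: "bnd uR mu0 a a' \<alpha>s \<le> bndJ uR mu0 a a' lo hi" for a'
          by (rule bnd_mono[OF lo0 loa ahi])
        from ne obtain \<nu>' where "\<nu>' \<in> intIC_J uR mu0 a lo hi" by auto
        then have "\<nu>' \<in> simplex" "\<forall>a'. a' \<noteq> a \<longrightarrow> bnd uR mu0 a a' \<alpha>s < dot (dU uR a a') \<nu>'"
          unfolding intIC_J_def using mono by (auto intro: le_less_trans)
        then have "a \<in> A_rel uR mu0 \<alpha>s" by (rule strict_rel[OF alpha_pos])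
        moreover have "\<nu> \<in> region uR mu0 a \<alpha>s"
          using r mono unfolding regionJ_def region_def by (auto intro: order_trans)
        ultimately show "a \<in> A_rel uR mu0 \<alpha>s \<and> \<nu> \<in> region uR mu0 a \<alpha>s" by auto
      qed
    qed
    have sv_f: "svalue uS \<tau>f = svalue uS \<tau>s"
      unfolding svalue_def \<tau>f_def by (rule sum_list_filter_zero[OF zero_out]) simp
    have "OPT_safe uS uR mu0 lo hi = svalue uS \<tau>s"
      unfolding OPT_safe_def
    proof (rule cSup_eq_maximum)
      show "svalue uS \<tau>s \<in> svalue uS ` {\<tau>. feasible_safe uR mu0 lo hi \<tau>}"
        using fs sv_f by (metis (mono_tags, lifting) image_eqI mem_Collect_eq)
      fix x assume "x \<in> svalue uS ` {\<tau>. feasible_safe uR mu0 lo hi \<tau>}"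
      then obtain \<tau> where "feasible_safe uR mu0 lo hi \<tau>" "x = svalue uS \<tau>" by auto
      then have "x \<le> OPT uS uR mu0 \<alpha>s" unfolding OPT_def
        using safe_true bdd by (auto intro: cSup_upper)
      then show "x \<le> svalue uS \<tau>s" using opt_v by simp
    qed
    then show "svalue uS \<tau>s = OPT_safe uS uR mu0 lo hi" "OPT_safe uS uR mu0 lo hi = OPT uS uR mu0 \<alpha>s"
      using opt_v by auto
  qed
qed

end
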